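(* Fix $\alpha\in(0,1)$. In $\mathbb{Z}^4$, let $K=\{(x_1,x_2,0,0)\in\mathbb{Z}^4: x_1\ge0,\ |x_2|\le x_1^\alpha\}$ and $\Gamma=\mathbb{Z}^4\setminus K$, and equip $\mathbb{Z}^4$ with the lazy simple random walk (at each step stay put with probability $1/2$, otherwise move to one of the $8$ nearest neighbours, each with probability $1/16$). Then $\mathbb{Z}^4$ is $S$-transient with respect to $K$. Moreover, for every $\varepsilon\in(0,1)$ there is $L_\varepsilon>0$ such that $\psi_K(\mathbf{x})\le1-\varepsilon$ for all $\mathbf{x}\in\Gamma$ with $d_{\mathbf{x}}\ge|x_1^*|\ge L_\varepsilon$, where $d_{\mathbf{x}}:=d(\mathbf{x},K)$ and $\mathbf{x}^*=(x_1^*,x_2^*,x_3^*,x_4^* )\in K$ is a point achieving $d(\mathbf{x},K)$.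
   Context: $d$ is the graph (i.e. $\ell^1$) distance on $\mathbb{Z}^4$. $\psi_K(\mathbf{x})=\mathbb{P}^{\mathbf{x}}(\tau_K<\infty)$ where $\tau_K=\min\{n\ge0:X_n\in K\}$ for the lazy simple random walk $(X_n)$. $\mathbb{Z}^4$ is $S$-transient with respect to $K$ if there is a point $\mathbf{x}$ with $\psi_K(\mathbf{x})<1$. *)

theory Defs
  imports "HOL-Probability.Probability" "HOL-Library.Product_Plus"
begin

type_synonym pt = "int \<times> int \<times> int \<times> int"

definition l1dist :: "pt \<Rightarrow> pt \<Rightarrow> int" where
  "l1dist x y = (case x of (x1,x2,x3,x4) \<Rightarrow> case y of (y1,y2,y3,y4) \<Rightarrow>
      \<bar>x1 - y1\<bar> + \<bar>x2 - y2\<bar> + \<bar>x3 - y3\<bar> + \<bar>x4 - y4\<bar>)"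

definition nbrs :: "pt set" where
  "nbrs = {(1,0,0,0), (-1,0,0,0), (0,1,0,0), (0,-1,0,0),
           (0,0,1,0), (0,0,-1,0), (0,0,0,1), (0,0,0,-1)}"

definition lazy_step :: "pt pmf" where
  "lazy_step = do { b \<leftarrow> bernoulli_pmf (1/2);
                    if b then return_pmf 0 else pmf_of_set nbrs }"

text \<open>Path space: i.i.d. sequence of increments.\<close>
definition walk_space :: "pt stream measure" where
  "walk_space = stream_space (measure_pmf lazy_step)"

definition walk :: "pt \<Rightarrow> pt stream \<Rightarrow> nat \<Rightarrow> pt" where
  "walk x \<omega> n = x + sum_list (stake n \<omega>)"

text \<open>psi_K(x) = P^x(tau_K < infinity), tau_K = min{n >= 0 : X_n in K}.\<close>
definition psi :: "pt set \<Rightarrow> pt \<Rightarrow> real" where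
  "psi K x = measure walk_space {\<omega> \<in> space walk_space. \<exists>n. walk x \<omega> n \<in> K}"

definition S_transient :: "pt set \<Rightarrow> bool" where
  "S_transient K \<longleftrightarrow> (\<exists>x. psi K x < 1)"

definition Kset :: "real \<Rightarrow> pt set" where
  "Kset \<alpha> = {(x1,x2,x3,x4). x3 = 0 \<and> x4 = 0 \<and> x1 \<ge> 0 \<and>
                real_of_int \<bar>x2\<bar> \<le> real_of_int x1 powr \<alpha>}"

definition nearest :: "pt set \<Rightarrow> pt \<Rightarrow> pt \<Rightarrow> bool" where
  "nearest K x xs \<longleftrightarrow> xs \<in> K \<and> (\<forall>y\<in>K. l1dist x xs \<le> l1dist x y)"

end

theory Submission
  imports Defs
begin


lemma walk_meas: "(\<lambda>\<omega>. walk x \<omega> n) \<in> measurable walk_space (count_space UNIV)"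
proof -
  have "stake n \<in> measurable walk_space (count_space UNIV)"
  proof -
    have "sets walk_space = sets (stream_space (count_space UNIV))"
      unfolding walk_space_def by (intro sets_stream_space_cong) simp
    then show ?thesis using measurable_stake[where i=n and 'a=pt]
      by (subst measurable_cong_sets[OF _ refl]) auto
  qed
  then show ?thesis unfolding walk_def by simp
qed

lemma walk_set_meas: "{\<omega>\<in>space walk_space. \<exists>m\<le>n. walk x \<omega> m \<in> K} \<in> sets walk_space"
proof -
  have "{\<omega>\<in>space walk_space. \<exists>m\<le>n. walk x \<omega> m \<in> K} = (\<Union>m\<le>n. (\<lambda>\<omega>. walk x \<omega> m) -` K \<inter> space walk_space)"
    by auto
  also have "\<dots> \<in> sets walk_space"
    using walk_meas by (intro sets.finite_UN) (auto simp: measurable_def)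
  finally show ?thesis .
qed

lemma walk_Suc: "walk x (s ## \<omega>) (Suc m) = walk (x + s) \<omega> m"
  by (simp add: walk_def add.assoc)

lemma walk_0: "walk x \<omega> 0 = x" by (simp add: walk_def)

lemma ps: "prob_space (measure_pmf lazy_step)" by (rule prob_space_measure_pmf)

lemma wsp: "prob_space walk_space" unfolding walk_space_def by (rule prob_space.prob_space_stream_space[OF ps])

lemma hit_fin:
  assumes K1: "\<And>x. x \<in> K \<Longrightarrow> F x \<ge> 1"
    and sup: "\<And>x. (\<integral>\<^sup>+s. F (x+s) \<partial>lazy_step) \<le> F x"
  shows "emeasure walk_space {\<omega>\<in>space walk_space. \<exists>m\<le>n. walk x \<omega> m \<in> K} \<le> F x"
proof (induction n arbitrary: x)
  interpret P: prob_space "measure_pmf lazy_step" by (rule ps)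
  interpret S: prob_space walk_space by (rule wsp)
  case 0
  show ?case
  proof (cases "x \<in> K")
    case True
    then show ?thesis using K1[OF True] S.emeasure_le_1 order_trans by blast
  next
    case False
    have E: "{\<omega>\<in>space walk_space. \<exists>m\<le>0. walk x \<omega> m \<in> K} = {}" using False by (simp add: walk_0)
    show ?thesis unfolding E by simp
  qed
next
  interpret P: prob_space "measure_pmf lazy_step" by (rule ps)
  interpret S: prob_space walk_space by (rule wsp)
  case (Suc n)
  show ?case
  proof (cases "x \<in> K")
    case True
    then show ?thesis using K1[OF True] S.emeasure_le_1 order_trans by blast
  next
    case False
    have "emeasure walk_space {\<omega>\<in>space walk_space. \<exists>m\<le>Suc n. walk x \<omega> m \<in> K}
       = (\<integral>\<^sup>+s. emeasure walk_space {\<omega>\<in>space walk_space. s ## \<omega> \<in> {\<omega>\<in>space walk_space. \<exists>m\<le>Suc n. walk x \<omega> m \<in> K}} \<partial>lazy_step)"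
      unfolding walk_space_def
      by (rule prob_space.emeasure_stream_space[OF ps]) (rule walk_set_meas[unfolded walk_space_def])
    also have "\<dots> = (\<integral>\<^sup>+s. emeasure walk_space {\<omega>\<in>space walk_space. \<exists>m\<le>n. walk (x+s) \<omega> m \<in> K} \<partial>lazy_step)"
    proof (intro nn_integral_cong arg_cong[where f="emeasure walk_space"])
      fix s
      have sp: "s ## \<omega> \<in> space walk_space \<longleftrightarrow> \<omega> \<in> space walk_space" for \<omega>
        by (simp add: walk_space_def space_stream_space)
      show "{\<omega>\<in>space walk_space. s ## \<omega> \<in> {\<omega>\<in>space walk_space. \<exists>m\<le>Suc n. walk x \<omega> m \<in> K}} = {\<omega>\<in>space walk_space. \<exists>m\<le>n. walk (x+s) \<omega> m \<in> K}"
      proof safe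
        fix \<omega> m assume "\<omega> \<in> space walk_space" "m \<le> Suc n" "walk x (s ## \<omega>) m \<in> K"
        then show "\<exists>m\<le>n. walk (x + s) \<omega> m \<in> K" using False
          by (cases m) (auto simp: walk_0 walk_Suc)
      next
        fix \<omega> m assume "\<omega> \<in> space walk_space" "m \<le> n" "walk (x + s) \<omega> m \<in> K"
        then show "\<exists>m\<le>Suc n. walk x (s ## \<omega>) m \<in> K"
          by (intro exI[of _ "Suc m"]) (auto simp: walk_Suc)
      qed (use sp in auto)
    qed
    also have "\<dots> \<le> (\<integral>\<^sup>+s. F (x+s) \<partial>lazy_step)"
      by (intro nn_integral_mono Suc.IH)
    also have "\<dots> \<le> F x" by (rule sup)
    finally show ?thesis .
  qed
qed

lemma hit_bound:
  assumes K1: "\<And>x. x \<in> K \<Longrightarrow> F x \<ge> 1"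
    and sup: "\<And>x. (\<integral>\<^sup>+s. F (x+s) \<partial>lazy_step) \<le> F x"
  shows "emeasure walk_space {\<omega>\<in>space walk_space. \<exists>n. walk x \<omega> n \<in> K} \<le> F x"
proof -
  have eq: "{\<omega>\<in>space walk_space. \<exists>n. walk x \<omega> n \<in> K} = (\<Union>n. {\<omega>\<in>space walk_space. \<exists>m\<le>n. walk x \<omega> m \<in> K})"
    by auto
  have "emeasure walk_space (\<Union>n. {\<omega>\<in>space walk_space. \<exists>m\<le>n. walk x \<omega> m \<in> K})
      = (SUP n. emeasure walk_space {\<omega>\<in>space walk_space. \<exists>m\<le>n. walk x \<omega> m \<in> K})"
    by (rule SUP_emeasure_incseq[symmetric]) (auto simp: incseq_def walk_set_meas intro: le_trans)
  also have "\<dots> \<le> F x" by (intro SUP_least hit_fin assms)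
  finally show ?thesis using eq by simp
qed



lemma pair_bd:
  fixes T u W :: real
  assumes "u^2 \<le> W" "W < T^2" "T > 0"
  shows "1/(T+u) + 1/(T-u) \<le> 2/T + 2*u^2/(T*(T^2-W))"
proof -
  have "\<bar>u\<bar> < T" using assms
    by (metis abs_le_square_iff abs_of_pos less_eq_real_def not_le order_le_less_trans)
  then have p1: "T+u > 0" and p2: "T-u > 0" by auto
  have e: "1/(T+u) + 1/(T-u) = 2/T + 2*u^2/(T*(T^2-u^2))"
  proof -
    have q: "T^2-u^2 > 0" using p1 p2 by (simp add: power2_eq_square algebra_simps) (metis mult_pos_pos p1 p2 diff_gt_0_iff_gt square_diff_square_factored mult.commute)
    have f: "T^2-u^2 = (T+u)*(T-u)" by (simp add: power2_eq_square algebra_simps)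
    show ?thesis unfolding f using p1 p2 assms(3) by (simp add: divide_simps) (simp add: algebra_simps power2_eq_square)
  qed
  have "T^2 - W \<le> T^2 - u^2" using assms by simp
  moreover have "0 < T^2 - W" using assms by simp
  ultimately have "2*u^2/(T*(T^2-u^2)) \<le> 2*u^2/(T*(T^2-W))"
    using assms(3) by (intro divide_left_mono mult_left_mono) (auto intro!: mult_pos_pos)
  then show ?thesis using e by simp
qed

lemma fin_ineq: fixes T ss :: real assumes "ss \<ge> 0" "T = ss + 5"
  shows "8/T + 8* ss/(T*(T^2-4* ss)) \<le> 8/(T-1)"
proof -
  define Q where "Q = T^2 - 4* ss"
  have Q: "Q > 0" unfolding Q_def assms(2) using assms(1) by (simp add: power2_eq_square algebra_simps) (smt (verit) assms(1) mult_nonneg_nonneg)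
  have T: "T > 1" using assms by simp
  have e: "8/T + 8* ss/(T*Q) = 8*(Q+ss)/(T*Q)" using Q T by (simp add: field_simps)
  have k: "(Q+ss)*(T-1) \<le> T*Q" unfolding Q_def assms(2) using assms(1) by (simp add: algebra_simps power2_eq_square)
  have "8*(Q+ss)/(T*Q) \<le> 8/(T-1)" proof -
    have "(8*Q+8* ss)*(T-1) = 8*((Q+ss)*(T-1))" by (simp add: algebra_simps)
    with k have "(8*Q+8* ss)*(T-1) \<le> 8*(T*Q)" by linarith
    then show ?thesis using Q T by (simp add: divide_simps)
  qed
  then show ?thesis using e Q_def by simp
qed

lemma core_ineq:
  fixes a b c d :: real
  defines "ss \<equiv> a^2+b^2+c^2+d^2"
  defines "T \<equiv> ss + 5"
  shows "1/(T+2*a) + 1/(T-2*a) + 1/(T+2*b) + 1/(T-2*b) + 1/(T+2*c) + 1/(T-2*c) + 1/(T+2*d) + 1/(T-2*d)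
         \<le> 8/(T-1)"
proof -
  have s0: "ss \<ge> 0" unfolding ss_def by simp
  have T0: "T > 0" unfolding T_def using s0 by simp
  have W: "4* ss < (T::real)^2" unfolding T_def using s0 by (simp add: power2_eq_square algebra_simps) (smt (verit) s0 mult_nonneg_nonneg)
  have ua: "(2*a)^2 \<le> 4* ss" and ub: "(2*b)^2 \<le> 4* ss" and uc: "(2*c)^2 \<le> 4* ss" and ud: "(2*d)^2 \<le> 4* ss"
    unfolding ss_def by (simp_all add: power2_eq_square)
  have "1/(T+2*a) + 1/(T-2*a) + 1/(T+2*b) + 1/(T-2*b) + 1/(T+2*c) + 1/(T-2*c) + 1/(T+2*d) + 1/(T-2*d)
     \<le> (2/T + 2*(2*a)^2/(T*(T^2-4* ss))) + (2/T + 2*(2*b)^2/(T*(T^2-4* ss)))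
       + (2/T + 2*(2*c)^2/(T*(T^2-4* ss))) + (2/T + 2*(2*d)^2/(T*(T^2-4* ss)))"
    using pair_bd[OF ua W T0] pair_bd[OF ub W T0] pair_bd[OF uc W T0] pair_bd[OF ud W T0] by linarith
  also have "\<dots> = 8/T + (2*(2*a)^2 + 2*(2*b)^2 + 2*(2*c)^2 + 2*(2*d)^2)/(T*(T^2-4* ss))"
    by (simp add: add_divide_distrib)
  also have "(2*(2*a)^2 + 2*(2*b)^2 + 2*(2*c)^2 + 2*(2*d)^2) = 8 * ss"
    unfolding ss_def by (simp add: algebra_simps power2_eq_square)
  also have "8/T + 8 * ss/(T*(T^2-4* ss)) \<le> 8/(T-1)" by (rule fin_ineq[OF s0 T_def[THEN meta_eq_to_obj_eq]])
  finally show ?thesis .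
qed



lemma nbrs_fin: "finite nbrs" and nbrs_ne: "nbrs \<noteq> {}" and nbrs_card: "card nbrs = 8"
  unfolding nbrs_def by auto

lemma lazy_nn: "(\<integral>\<^sup>+s. g s \<partial>lazy_step) = g 0 / 2 + (\<Sum>e\<in>nbrs. g e) / 8 / 2"
proof -
  have "(\<integral>\<^sup>+s. g s \<partial>lazy_step) = (\<integral>\<^sup>+b. (\<integral>\<^sup>+s. g s \<partial>(if b then return_pmf 0 else pmf_of_set nbrs)) \<partial>bernoulli_pmf (1/2))"
    unfolding lazy_step_def by simp
  also have "\<dots> = g 0 * ennreal (1/2) + (\<Sum>e\<in>nbrs. g e) / 8 * ennreal (1 - 1/2)"
    by (subst nn_integral_bernoulli_pmf) (auto simp: nn_integral_pmf_of_set[OF nbrs_ne nbrs_fin] nbrs_card nn_integral_return)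
  also have "ennreal (1/2) = inverse 2" by (rule ennreal_half)
  also have "ennreal (1 - 1/2) = inverse 2" by simp
  finally show ?thesis
    by (simp only: divide_ennreal_def)
qed



lemma core2:
  fixes a b c d :: real
  shows "1/((a+1)^2+b^2+c^2+d^2+4) + 1/((a-1)^2+b^2+c^2+d^2+4)
       + 1/(a^2+(b+1)^2+c^2+d^2+4) + 1/(a^2+(b-1)^2+c^2+d^2+4)
       + 1/(a^2+b^2+(c+1)^2+d^2+4) + 1/(a^2+b^2+(c-1)^2+d^2+4)
       + 1/(a^2+b^2+c^2+(d+1)^2+4) + 1/(a^2+b^2+c^2+(d-1)^2+4)
       \<le> 8 * (1/(a^2+b^2+c^2+d^2+4))"
proof -
  define T where "T = a^2+b^2+c^2+d^2+5"
  have 1: "(a+1)^2+b^2+c^2+d^2+4 = T+2*a" "(a-1)^2+b^2+c^2+d^2+4 = T-2*a"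
     "a^2+(b+1)^2+c^2+d^2+4 = T+2*b" "a^2+(b-1)^2+c^2+d^2+4 = T-2*b"
     "a^2+b^2+(c+1)^2+d^2+4 = T+2*c" "a^2+b^2+(c-1)^2+d^2+4 = T-2*c"
     "a^2+b^2+c^2+(d+1)^2+4 = T+2*d" "a^2+b^2+c^2+(d-1)^2+4 = T-2*d"
     "a^2+b^2+c^2+d^2+4 = T-1"
    unfolding T_def by (simp_all add: power2_eq_square algebra_simps)
  show ?thesis unfolding 1 using core_ineq[of a b c d] unfolding T_def by simp
qed

definition hh :: "pt \<Rightarrow> real" where
  "hh z = (case z of (a,b,c,d) \<Rightarrow> 1/((of_int a)^2 + (of_int b)^2 + (of_int c)^2 + (of_int d)^2 + 4))"

lemma hh_pos: "hh z > 0"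
  unfolding hh_def by (cases z) (auto intro!: add_nonneg_pos)

lemma hh_sum: "(\<Sum>e\<in>nbrs. hh (z+e)) \<le> 8 * hh z"
proof -
  obtain a b c d where z: "z = (a,b,c,d)" by (cases z) auto
  show ?thesis
    using core2[of "of_int a" "of_int b" "of_int c" "of_int d"]
    unfolding z nbrs_def hh_def by (simp add: add.assoc)
qed

lemma ediv: "0 \<le> x \<Longrightarrow> ennreal x / numeral n = ennreal (x / numeral n)"
  by (metis divide_ennreal ennreal_numeral zero_less_numeral)

lemma hh_super: "(\<integral>\<^sup>+s. ennreal (hh (z+s)) \<partial>lazy_step) \<le> ennreal (hh z)"
proof -
  have "(\<integral>\<^sup>+s. ennreal (hh (z+s)) \<partial>lazy_step) = ennreal (hh z) / 2 + ennreal (\<Sum>e\<in>nbrs. hh (z+e)) / 8 / 2"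
    by (simp add: lazy_nn sum_ennreal hh_pos less_imp_le)
  also have "\<dots> = ennreal (hh z / 2 + (\<Sum>e\<in>nbrs. hh (z+e)) / 8 / 2)"
    using hh_pos by (simp add: ediv ennreal_plus sum_nonneg less_imp_le)
  also have "\<dots> \<le> ennreal (hh z)"
    using hh_sum[of z] by (intro ennreal_leI) simp
  finally show ?thesis .
qed



definition mm :: "real \<Rightarrow> nat \<Rightarrow> int" where
  "mm \<alpha> n = \<lfloor>real n powr \<alpha>\<rfloor>"

definition FF :: "real \<Rightarrow> pt \<Rightarrow> ennreal" where
  "FF \<alpha> x = (\<Sum>n. \<Sum>j\<in>{-mm \<alpha> n..mm \<alpha> n}. ennreal (hh (x - (int n, j, 0, 0))))"

lemma FF_super: "(\<integral>\<^sup>+s. 4 * FF \<alpha> (x+s) \<partial>lazy_step) \<le> 4 * FF \<alpha> x"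
proof -
  have "(\<integral>\<^sup>+s. 4 * FF \<alpha> (x+s) \<partial>lazy_step) = 4 * (\<integral>\<^sup>+s. FF \<alpha> (x+s) \<partial>lazy_step)"
    by (rule nn_integral_cmult) simp
  also have "(\<integral>\<^sup>+s. FF \<alpha> (x+s) \<partial>lazy_step)
     = (\<Sum>n. \<Sum>j\<in>{-mm \<alpha> n..mm \<alpha> n}. \<integral>\<^sup>+s. ennreal (hh (x + s - (int n, j, 0, 0))) \<partial>lazy_step)"
    unfolding FF_def by (subst nn_integral_suminf) (simp_all add: nn_integral_sum)
  also have "\<dots> \<le> (\<Sum>n. \<Sum>j\<in>{-mm \<alpha> n..mm \<alpha> n}. ennreal (hh (x - (int n, j, 0, 0))))"
  proof (intro suminf_le summableI sum_mono)
    fix n j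
    have eq: "x + s - (int n, j, 0, 0) = (x - (int n, j, 0, 0)) + s" for s :: pt by (simp add: algebra_simps)
    show "(\<integral>\<^sup>+s. ennreal (hh (x + s - (int n, j, 0, 0))) \<partial>lazy_step) \<le> ennreal (hh (x - (int n, j, 0, 0)))"
      unfolding eq by (rule hh_super)
  qed
  finally show ?thesis unfolding FF_def by (simp add: mult_left_mono)
qed

lemma FF_K: assumes "x \<in> Kset \<alpha>" shows "1 \<le> 4 * FF \<alpha> x"
proof -
  obtain a b where x: "x = (a,b,0,0)" and a: "a \<ge> 0" and b: "real_of_int \<bar>b\<bar> \<le> real_of_int a powr \<alpha>"
    using assms unfolding Kset_def by auto
  have bm: "b \<in> {-mm \<alpha> (nat a)..mm \<alpha> (nat a)}"
  proof -
    have "-b \<le> \<lfloor>real_of_int a powr \<alpha>\<rfloor>" "b \<le> \<lfloor>real_of_int a powr \<alpha>\<rfloor>"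
      using b by (auto simp: le_floor_iff abs_le_iff)
    then show ?thesis using a unfolding mm_def by auto
  qed
  have "ennreal (hh (x - (int (nat a), b, 0, 0))) \<le> (\<Sum>j\<in>{-mm \<alpha> (nat a)..mm \<alpha> (nat a)}. ennreal (hh (x - (int (nat a), j, 0, 0))))"
    by (rule member_le_sum[OF bm]) auto
  also have "\<dots> \<le> FF \<alpha> x" unfolding FF_def
    by (rule sum_le_suminf[of _ "{nat a}", simplified]) auto
  finally have "ennreal (1/4) \<le> FF \<alpha> x" using a by (simp add: x hh_def zero_prod_def)
  then have "4 * ennreal (1/4) \<le> 4 * FF \<alpha> x" by (rule mult_left_mono) simp
  moreover have "4 * ennreal (1/4) = 1"
  proof -
    have "(4::ennreal) * ennreal (1/4) = ennreal 4 * ennreal (1/4)" by simp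
    also have "\<dots> = ennreal (4 * (1/4))" by (rule ennreal_mult[symmetric]) auto
    finally show ?thesis by simp
  qed
  ultimately show ?thesis by simp
qed

lemma psi_FF: "psi (Kset \<alpha>) x \<le> enn2real (4 * FF \<alpha> x) \<or> 4 * FF \<alpha> x = \<top>"
proof (cases "4 * FF \<alpha> x = \<top>")
  case False
  have le: "emeasure walk_space {\<omega>\<in>space walk_space. \<exists>n. walk x \<omega> n \<in> Kset \<alpha>} \<le> 4 * FF \<alpha> x"
    by (rule hit_bound[OF FF_K FF_super])
  have "4 * FF \<alpha> x < \<top>" using False by (simp add: top.not_eq_extremum)
  then have "enn2real (emeasure walk_space {\<omega>\<in>space walk_space. \<exists>n. walk x \<omega> n \<in> Kset \<alpha>}) \<le> enn2real (4 * FF \<alpha> x)"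
    by (intro enn2real_mono[OF le])
  then have "psi (Kset \<alpha>) x \<le> enn2real (4 * FF \<alpha> x)" unfolding psi_def measure_def .
  then show ?thesis by (rule disjI1)
qed simp



lemma cs4: fixes p q r s :: real
  shows "(\<bar>p\<bar>+\<bar>q\<bar>+\<bar>r\<bar>+\<bar>s\<bar>)^2 \<le> 4*(p^2+q^2+r^2+s^2)"
proof -
  have "0 \<le> (\<bar>p\<bar>-\<bar>q\<bar>)^2 + (\<bar>p\<bar>-\<bar>r\<bar>)^2 + (\<bar>p\<bar>-\<bar>s\<bar>)^2 + (\<bar>q\<bar>-\<bar>r\<bar>)^2 + (\<bar>q\<bar>-\<bar>s\<bar>)^2 + (\<bar>r\<bar>-\<bar>s\<bar>)^2"
    by simp
  then show ?thesis by (simp add: power2_eq_square algebra_simps abs_mult_self_eq)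
qed

lemma hh_term:
  fixes x :: pt and n :: nat and j :: int and d :: real
  assumes d1: "d \<ge> 1" and x1: "real_of_int \<bar>fst x\<bar> \<le> 2*d"
    and dist: "real_of_int (l1dist x (int n, j, 0, 0)) \<ge> d"
  shows "hh (x - (int n, j, 0, 0)) \<le> 100 / (real n + d)^2"
proof -
  obtain a b c e where x: "x = (a,b,c,e)" by (cases x) auto
  define l where "l = real_of_int (\<bar>a - int n\<bar> + \<bar>b - j\<bar> + \<bar>c\<bar> + \<bar>e\<bar>)"
  define S where "S = (real_of_int (a - int n))^2 + (real_of_int (b - j))^2 + (real_of_int c)^2 + (real_of_int e)^2"
  have ld: "l \<ge> d" using dist unfolding l_def x l1dist_def by simp
  have la: "l \<ge> \<bar>real_of_int a - real n\<bar>" unfolding l_def by simp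
  have xa: "\<bar>real_of_int a\<bar> \<le> 2*d" using x1 x by simp
  have lM: "l \<ge> (real n + d)/5"
  proof (cases "real n \<le> 4*d")
    case True then show ?thesis using ld by simp
  next
    case False then show ?thesis using la xa by (simp add: abs_if split: if_splits) 
  qed
  have l0: "(real n + d)/5 \<ge> 0" using d1 by simp
  have "l^2 \<le> 4*S" unfolding l_def S_def using cs4[of "real_of_int (a - int n)" "real_of_int (b - j)" "real_of_int c" "real_of_int e"]
    by simp
  moreover have "((real n + d)/5)^2 \<le> l^2" using lM l0 by (intro power_mono) auto
  ultimately have SS: "(real n + d)^2/100 \<le> S" by (simp add: power_divide)
  have pos: "(real n + d)^2/100 > 0" using d1 by simp
  have "hh (x - (int n, j, 0, 0)) = 1/(S+4)" unfolding x hh_def S_def by simp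
  also have "\<dots> \<le> 1/((real n + d)^2/100)"
  proof (rule divide_left_mono)
    have S0: "S \<ge> 0" unfolding S_def by simp
    show "(real n + d)^2/100 \<le> S + 4" using SS by simp
    show "0 < (S + 4) * ((real n + d)^2/100)" using S0 pos by (intro mult_pos_pos) auto
  qed simp
  also have "\<dots> = 100 / (real n + d)^2" by simp
  finally show ?thesis .
qed

lemma inner_bound:
  fixes x :: pt and n :: nat and d :: real
  assumes a: "0 < \<alpha>" and d1: "d \<ge> 1" and x1: "real_of_int \<bar>fst x\<bar> \<le> 2*d"
    and dist: "\<forall>y\<in>Kset \<alpha>. real_of_int (l1dist x y) \<ge> d"
  shows "(\<Sum>j\<in>{-mm \<alpha> n..mm \<alpha> n}. ennreal (hh (x - (int n, j, 0, 0))))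
     \<le> ennreal ((2 * real n powr \<alpha> + 1) * (100 / (real n + d)^2))"
proof -
  have m0: "mm \<alpha> n \<ge> 0" unfolding mm_def by simp
  have mle: "real_of_int (mm \<alpha> n) \<le> real n powr \<alpha>" unfolding mm_def by simp
  have "(\<Sum>j\<in>{-mm \<alpha> n..mm \<alpha> n}. ennreal (hh (x - (int n, j, 0, 0))))
      \<le> (\<Sum>j\<in>{-mm \<alpha> n..mm \<alpha> n}. ennreal (100 / (real n + d)^2))"
  proof (intro sum_mono ennreal_leI hh_term[OF d1 x1])
    fix j assume j: "j \<in> {-mm \<alpha> n..mm \<alpha> n}"
    have "(int n, j, 0, 0) \<in> Kset \<alpha>"
      unfolding Kset_def using j mle by auto
    then show "d \<le> real_of_int (l1dist x (int n, j, 0, 0))" using dist by blast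
  qed
  also have "\<dots> = ennreal (real (card {-mm \<alpha> n..mm \<alpha> n}) * (100 / (real n + d)^2))"
  proof -
    have "(\<Sum>j\<in>{-mm \<alpha> n..mm \<alpha> n}. ennreal (100 / (real n + d)^2)) = of_nat (card {-mm \<alpha> n..mm \<alpha> n}) * ennreal (100 / (real n + d)^2)"
      by (rule sum_constant)
    also have "\<dots> = ennreal (real (card {-mm \<alpha> n..mm \<alpha> n})) * ennreal (100 / (real n + d)^2)"
      by (simp only: ennreal_of_nat_eq_real_of_nat)
    also have "\<dots> = ennreal (real (card {-mm \<alpha> n..mm \<alpha> n}) * (100 / (real n + d)^2))"
      by (rule ennreal_mult[symmetric]) auto
    finally show ?thesis .
  qed
  also have "\<dots> \<le> ennreal ((2 * real n powr \<alpha> + 1) * (100 / (real n + d)^2))"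
  proof (intro ennreal_leI mult_right_mono)
    have "real (card {-mm \<alpha> n..mm \<alpha> n}) = 2 * real_of_int (mm \<alpha> n) + 1" using m0 by simp
    then show "real (card {-mm \<alpha> n..mm \<alpha> n}) \<le> 2 * real n powr \<alpha> + 1" using mle by simp
  qed simp
  finally show ?thesis .
qed



definition cc :: "real \<Rightarrow> real \<Rightarrow> nat \<Rightarrow> real" where
  "cc \<alpha> d n = (2 * real n powr \<alpha> + 1) * (100 / (real n + d)^2)"

lemma cc_nonneg: "d \<ge> 0 \<Longrightarrow> cc \<alpha> d n \<ge> 0"
  unfolding cc_def by simp

lemma cc_le: assumes "d \<ge> 1" shows "cc \<alpha> d n \<le> cc \<alpha> 1 n"
  unfolding cc_def
proof (intro mult_left_mono divide_left_mono)
  show "(real n + 1)^2 \<le> (real n + d)^2" using assms by (intro power_mono) auto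
qed (use assms in auto)

lemma cc_summ1: assumes "\<alpha> < 1" "0 < \<alpha>" shows "summable (cc \<alpha> 1)"
proof (rule summable_comparison_test)
  have s: "summable (\<lambda>n. real n powr (\<alpha> - 2))" using assms by (simp add: summable_real_powr_iff)
  then have "summable (\<lambda>n. real (Suc n) powr (\<alpha> - 2))" by (subst summable_Suc_iff)
  then show "summable (\<lambda>n. 300 * real (Suc n) powr (\<alpha> - 2))" by (rule summable_mult)
  show "\<exists>N. \<forall>n\<ge>N. norm (cc \<alpha> 1 n) \<le> 300 * real (Suc n) powr (\<alpha> - 2)"
  proof (intro exI allI impI)
    fix n :: nat
    have p: "real n powr \<alpha> \<le> real (Suc n) powr \<alpha>" using assms by (intro powr_mono2) auto
    have q: "1 \<le> real (Suc n) powr \<alpha>" using assms by (simp add: ge_one_powr_ge_zero)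
    have e: "real (Suc n) powr (\<alpha> - 2) = real (Suc n) powr \<alpha> / (real n + 1)^2"
    proof -
      have "real (Suc n) powr (\<alpha> - 2) = real (Suc n) powr \<alpha> / real (Suc n) powr 2" by (rule powr_diff)
      also have "real (Suc n) powr 2 = (real n + 1)^2"
        using powr_realpow[of "real (Suc n)" 2] by simp
      finally show ?thesis .
    qed
    have "cc \<alpha> 1 n \<le> (3 * real (Suc n) powr \<alpha>) * (100 / (real n + 1)^2)"
      unfolding cc_def using p q by (intro mult_right_mono) auto
    also have "\<dots> = 300 * real (Suc n) powr (\<alpha> - 2)" unfolding e by simp
    finally show "norm (cc \<alpha> 1 n) \<le> 300 * real (Suc n) powr (\<alpha> - 2)"
      using cc_nonneg[of 1 \<alpha> n] by simp
  qed
qed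

lemma cc_summ: assumes "\<alpha> < 1" "0 < \<alpha>" "d \<ge> 1" shows "summable (cc \<alpha> d)"
  by (rule summable_comparison_test[OF _ cc_summ1[OF assms(1,2)]])
     (use cc_le[OF assms(3)] cc_nonneg assms(3) in auto)

lemma cc_tail:
  assumes "\<alpha> < 1" "0 < \<alpha>" "e > 0"
  shows "\<exists>L\<ge>1. \<forall>d\<ge>L. (\<Sum>n. cc \<alpha> d n) \<le> e"
proof -
  obtain N where N: "\<And>n. n \<ge> N \<Longrightarrow> norm (\<Sum>i. cc \<alpha> 1 (i + n)) < e/2"
    using suminf_exist_split[OF _ cc_summ1[OF assms(1,2)], of "e/2"] assms by auto
  define C where "C = real N * (2 * real N powr \<alpha> + 1) * 100"
  have C0: "C \<ge> 0" unfolding C_def by simp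
  define L where "L = max 1 (2*C/e)"
  show ?thesis
  proof (intro exI[of _ L] conjI allI impI)
    show "1 \<le> L" unfolding L_def by simp
    fix d assume dL: "d \<ge> L"
    have d1: "d \<ge> 1" using dL unfolding L_def by simp
    have sd: "summable (cc \<alpha> d)" by (rule cc_summ[OF assms(1,2) d1])
    have split: "(\<Sum>n. cc \<alpha> d n) = (\<Sum>i. cc \<alpha> d (i + N)) + (\<Sum>i<N. cc \<alpha> d i)"
      by (rule suminf_split_initial_segment[OF sd])
    have t1: "(\<Sum>i. cc \<alpha> d (i + N)) \<le> (\<Sum>i. cc \<alpha> 1 (i + N))"
      using cc_le[OF d1] sd cc_summ1[OF assms(1,2)]
      by (intro suminf_le) (auto simp: summable_iff_shift)
    have t1': "(\<Sum>i. cc \<alpha> 1 (i + N)) < e/2" using N[of N] by simp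
    have t2: "(\<Sum>i<N. cc \<alpha> d i) \<le> (\<Sum>i<N. (2 * real N powr \<alpha> + 1) * (100 / d))"
    proof (intro sum_mono)
      fix i assume "i \<in> {..<N}"
      then have iN: "real i \<le> real N" by simp
      have a: "real i powr \<alpha> \<le> real N powr \<alpha>" using iN assms by (intro powr_mono2) auto
      have "d \<le> (real i + d)^2"
      proof -
        have "d \<le> d^2" using d1 by (simp add: power2_eq_square)
        also have "d^2 \<le> (real i + d)^2" using d1 by (intro power_mono) auto
        finally show ?thesis .
      qed
      then have b: "100 / (real i + d)^2 \<le> 100 / d" using d1 by (intro divide_left_mono) auto
      show "cc \<alpha> d i \<le> (2 * real N powr \<alpha> + 1) * (100 / d)"
        unfolding cc_def using a b by (intro mult_mono) auto
    qed
    also have "\<dots> = C / d" unfolding C_def by simp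
    also have "\<dots> \<le> e/2"
    proof -
      have "2*C/e \<le> d" using dL unfolding L_def by simp
      then have "2*C \<le> d * e" using assms(3) by (simp add: divide_le_eq)
      then have "C \<le> (e/2) * d" by (simp add: algebra_simps)
      then show ?thesis using d1 by (simp add: divide_le_eq)
    qed
    finally show "(\<Sum>n. cc \<alpha> d n) \<le> e" using split t1 t1' by linarith
  qed
qed



lemma FF_bound:
  assumes a: "0 < \<alpha>" "\<alpha> < 1" and d1: "d \<ge> 1" and x1: "real_of_int \<bar>fst x\<bar> \<le> 2*d"
    and dist: "\<forall>y\<in>Kset \<alpha>. real_of_int (l1dist x y) \<ge> d"
  shows "psi (Kset \<alpha>) x \<le> 4 * (\<Sum>n. cc \<alpha> d n)"
proof -
  have "FF \<alpha> x \<le> (\<Sum>n. ennreal (cc \<alpha> d n))"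
    unfolding FF_def cc_def
    by (intro suminf_le summableI inner_bound[OF a(1) d1 x1 dist])
  also have "\<dots> = ennreal (\<Sum>n. cc \<alpha> d n)"
    using cc_nonneg d1 cc_summ[OF a(2,1) d1] by (intro suminf_ennreal2) auto
  finally have "4 * FF \<alpha> x \<le> 4 * ennreal (\<Sum>n. cc \<alpha> d n)" by (rule mult_left_mono) simp
  also have "\<dots> = ennreal (4 * (\<Sum>n. cc \<alpha> d n))" by (simp add: ennreal_mult')
  finally have le: "4 * FF \<alpha> x \<le> ennreal (4 * (\<Sum>n. cc \<alpha> d n))" .
  have nt: "4 * FF \<alpha> x \<noteq> \<top>"
  proof
    assume "4 * FF \<alpha> x = \<top>"
    with le have "\<top> \<le> ennreal (4 * (\<Sum>n. cc \<alpha> d n))" by simp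
    then show False by (simp add: top_unique)
  qed
  have S0: "0 \<le> (\<Sum>n. cc \<alpha> d n)"
    using cc_nonneg d1 cc_summ[OF a(2,1) d1] by (intro suminf_nonneg) auto
  have "enn2real (4 * FF \<alpha> x) \<le> 4 * (\<Sum>n. cc \<alpha> d n)"
  proof -
    have "enn2real (4 * FF \<alpha> x) \<le> enn2real (ennreal (4 * (\<Sum>n. cc \<alpha> d n)))"
      by (rule enn2real_mono[OF le]) simp
    also have "\<dots> = 4 * (\<Sum>n. cc \<alpha> d n)" using S0 by simp
    finally show ?thesis .
  qed
  then show ?thesis using psi_FF[of \<alpha> x] nt by linarith
qed

lemma l1_fst: "l1dist x y \<ge> \<bar>fst x - fst y\<bar>"
  by (cases x; cases y) (simp add: l1dist_def)

theorem lemma3p30: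
  fixes \<alpha> :: real
  assumes "0 < \<alpha>" and "\<alpha> < 1"
  shows "S_transient (Kset \<alpha>) \<and>
    (\<forall>\<epsilon>::real. 0 < \<epsilon> \<and> \<epsilon> < 1 \<longrightarrow>
      (\<exists>L::real. L > 0 \<and>
        (\<forall>x xs. x \<notin> Kset \<alpha> \<and> nearest (Kset \<alpha>) x xs \<and>
           real_of_int (l1dist x xs) \<ge> real_of_int \<bar>fst xs\<bar> \<and>
           real_of_int \<bar>fst xs\<bar> \<ge> L
           \<longrightarrow> psi (Kset \<alpha>) x \<le> 1 - \<epsilon>)))"
proof -
  have main: "\<exists>L::real. L > 0 \<and>
        (\<forall>x xs. x \<notin> Kset \<alpha> \<and> nearest (Kset \<alpha>) x xs \<and>
           real_of_int (l1dist x xs) \<ge> real_of_int \<bar>fst xs\<bar> \<and>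
           real_of_int \<bar>fst xs\<bar> \<ge> L
           \<longrightarrow> psi (Kset \<alpha>) x \<le> 1 - \<epsilon>)" if e: "0 < \<epsilon>" "\<epsilon> < 1" for \<epsilon>
  proof -
    obtain L where L1: "L \<ge> 1" and L: "\<And>d. d \<ge> L \<Longrightarrow> (\<Sum>n. cc \<alpha> d n) \<le> (1-\<epsilon>)/4"
      using cc_tail[OF assms(2,1), of "(1-\<epsilon>)/4"] e by auto
    show ?thesis
    proof (intro exI[of _ L] conjI allI impI)
      show "L > 0" using L1 by simp
      fix x xs assume h: "x \<notin> Kset \<alpha> \<and> nearest (Kset \<alpha>) x xs \<and>
           real_of_int (l1dist x xs) \<ge> real_of_int \<bar>fst xs\<bar> \<and> real_of_int \<bar>fst xs\<bar> \<ge> L"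
      define d where "d = real_of_int (l1dist x xs)"
      have dL: "d \<ge> L" using h unfolding d_def by linarith
      have d1: "d \<ge> 1" using dL L1 by simp
      have "\<bar>fst x - fst xs\<bar> \<le> l1dist x xs" by (rule l1_fst)
      then have x1: "real_of_int \<bar>fst x\<bar> \<le> 2*d" using h unfolding d_def by linarith
      have dist: "\<forall>y\<in>Kset \<alpha>. real_of_int (l1dist x y) \<ge> d"
        using h unfolding nearest_def d_def by auto
      have "psi (Kset \<alpha>) x \<le> 4 * (\<Sum>n. cc \<alpha> d n)" by (rule FF_bound[OF assms d1 x1 dist])
      also have "\<dots> \<le> 1 - \<epsilon>" using L[OF dL] by simp
      finally show "psi (Kset \<alpha>) x \<le> 1 - \<epsilon>" .
    qed
  qed
  have "S_transient (Kset \<alpha>)"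
  proof -
    from main[of "1/2"] obtain L where L0: "L > 0" and L': "\<forall>x xs. x \<notin> Kset \<alpha> \<and> nearest (Kset \<alpha>) x xs \<and>
           real_of_int (l1dist x xs) \<ge> real_of_int \<bar>fst xs\<bar> \<and>
           real_of_int \<bar>fst xs\<bar> \<ge> L \<longrightarrow> psi (Kset \<alpha>) x \<le> 1 - 1/2"
      by auto
    note L = L'[rule_format]
    define N where "N = \<lceil>L\<rceil>"
    have N1: "N \<ge> 1" using L0 unfolding N_def by (simp add: ceiling_le_iff)
    have NL: "real_of_int N \<ge> L" unfolding N_def by simp
    have nK: "(N,0,N,0) \<notin> Kset \<alpha>" using N1 unfolding Kset_def by auto
    have inK: "(N,0,0,0) \<in> Kset \<alpha>" using N1 unfolding Kset_def by auto
    have near: "nearest (Kset \<alpha>) (N,0,N,0) (N,0,0,0)"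
      unfolding nearest_def using inK N1 by (auto simp: Kset_def l1dist_def)
    have "psi (Kset \<alpha>) (N,0,N,0) \<le> 1 - 1/2"
      using L[of "(N,0,N,0)" "(N,0,0,0)"] nK near N1 NL by (simp add: l1dist_def)
    then show ?thesis unfolding S_transient_def by (intro exI[of _ "(N,0,N,0)"]) simp
  qed
  then show ?thesis using main by blast
qed


end
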